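(* Let $\mathcal{S}\subseteq\mathcal{S}^N$ be a closed set such that for every $\bm S\in\mathbb{R}^{N\times N}$ the Frobenius-norm projection $P_{\mathcal{S}}(\bm S):=\arg\min_{\hat{\bm S}\in\mathcal{S}}\Vert\bm S-\hat{\bm S}\Vert_{\rm F}$ is unique. Fix $\bm\Lambda_o\in\mathcal{D}_N$ with non-increasing diagonal entries and let $\mathcal{M}:=\{\bm V\bm\Lambda_o\bm V^T:\bm V\in{\rm O}(N)\}$. Let $\bm S_0\in\mathcal{M}$ and generate a sequence by the alternating projections method $$\bm S_{k+1/2}=P_{\mathcal{S}}(\bm S_k),\qquad \bm S_{k+1}\in P_{\mathcal{M}}(\bm S_{k+1/2}),$$ where for $\bm Y\in\mathcal{S}^N$, $P_{\mathcal{M}}(\bm Y)$ denotes the set of matrices $\bm Q\bm\Lambda_o\bm Q^T$ over all eigendecompositions $\bm Y=\bm Q\bm\Lambda\bm Q^T$ ($\bm Q\in{\rm O}(N)$) with non-increasing diagonal $\bm\Lambda$. Then there exists a limit point $\bm S$ of the sequence $(\bm S_k)$ which is a fixed point of this iteration and satisfies $$\Vert\bm S-P_{\mathcal{S}}(\bm S)\Vert=\lim_{k\to\infty}\Vert\bm S_k-P_{\mathcal{S}}(\bm S_k)\Vert .$$ Moreover, if this limit is zero, then $\bm S\in\mathcal{S}\cap\mathcal{M}$.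
   Context: $\mathcal{S}^N$ denotes the set of real symmetric $N\times N$ matrices, $\mathcal{D}_N$ the set of real $N\times N$ diagonal matrices, ${\rm O}(N)$ the set of $N\times N$ real orthogonal matrices. A diagonal matrix $\bm\Lambda$ has non-increasing diagonal entries if $[\bm\Lambda]_{ii}\ge[\bm\Lambda]_{jj}$ for $i<j$. Fixed point: a matrix $\bm S\in\mathcal{S}^N$ is a fixed point of the alternating projections iteration if there exists an eigendecomposition $P_{\mathcal{S}}(\bm S)=\bm Q\bm\Lambda\bm Q^T$ with $\bm Q\in{\rm O}(N)$ and non-increasing diagonal $\bm\Lambda$ such that $\bm S=\bm Q\bm\Lambda_o\bm Q^T$; equivalently $\bm S\in P_{\mathcal{M}}(P_{\mathcal{S}}(\bm S))$. *)

theory Defs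
  imports "HOL-Analysis.Analysis"
begin

text \<open>N x N real matrices are rendered as real^'n^'n with 'n a finite linearly ordered
index type (the order is needed to speak of non-increasing diagonal entries).
The library norm on real^'n^'n is exactly the Frobenius norm.\<close>

definition symmetric_mat :: "real^'n^'n \<Rightarrow> bool" where
  "symmetric_mat A \<longleftrightarrow> transpose A = A"

definition diagonal_mat :: "real^'n^'n \<Rightarrow> bool" where
  "diagonal_mat D \<longleftrightarrow> (\<forall>i j. i \<noteq> j \<longrightarrow> D $ i $ j = 0)"

definition nonincr_diag :: "real^('n::{finite,linorder})^('n::{finite,linorder}) \<Rightarrow> bool" where
  "nonincr_diag D \<longleftrightarrow> (\<forall>i j. i < j \<longrightarrow> D $ j $ j \<le> D $ i $ i)"

text \<open>Frobenius-norm projection onto a set (meaningful when the minimiser exists and is unique).\<close>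
definition proj_set :: "(real^'n^'n) set \<Rightarrow> real^'n^'n \<Rightarrow> real^'n^'n" where
  "proj_set S X = (THE Y. Y \<in> S \<and> (\<forall>Z\<in>S. norm (X - Y) \<le> norm (X - Z)))"

definition iso_set :: "real^'n^'n \<Rightarrow> (real^'n^'n) set" where
  "iso_set Lo = {V ** Lo ** transpose V | V. orthogonal_matrix V}"

definition proj_M :: "real^('n::{finite,linorder})^('n::{finite,linorder}) \<Rightarrow> real^('n::{finite,linorder})^('n::{finite,linorder}) \<Rightarrow> (real^('n::{finite,linorder})^('n::{finite,linorder})) set" where
  "proj_M Lo Y = {Q ** Lo ** transpose Q | Q. orthogonal_matrix Q \<and>
      (\<exists>L. diagonal_mat L \<and> nonincr_diag L \<and> Y = Q ** L ** transpose Q)}"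

end

theory Submission imports Defs begin
lemma inner_trace: "(X::real^'n^'n) \<bullet> Y = trace (transpose X ** Y)"
  unfolding inner_vec_def trace_def matrix_matrix_mult_def transpose_def
  by (simp add: inner_real_def) (rule sum.swap)

lemma orth_mul: "orthogonal_matrix Q \<Longrightarrow> transpose Q ** Q = mat 1"
  "orthogonal_matrix Q \<Longrightarrow> Q ** transpose Q = mat 1"
  by (simp_all add: orthogonal_matrix_def)

lemma inner_conj:
  fixes Q A B :: "real^'n^'n"
  assumes "orthogonal_matrix Q"
  shows "(Q ** A ** transpose Q) \<bullet> (Q ** B ** transpose Q) = A \<bullet> B"
proof -
  have "transpose (Q ** A ** transpose Q) ** (Q ** B ** transpose Q)
      = Q ** (transpose A ** B) ** transpose Q"
    by (simp add: matrix_transpose_mul matrix_mul_assoc[symmetric] orth_mul[OF assms])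
      (simp add: matrix_mul_assoc orth_mul[OF assms])
  then show ?thesis unfolding inner_trace
    by (metis trace_mul_sym matrix_mul_assoc orth_mul(1)[OF assms] matrix_mul_lid)
qed

lemma norm_conj:
  fixes Q A :: "real^'n^'n"
  assumes "orthogonal_matrix Q"
  shows "norm (Q ** A ** transpose Q) = norm A"
  by (simp add: norm_eq_sqrt_inner inner_conj[OF assms])

lemma norm_orth: "orthogonal_matrix (Q::real^'n^'n) \<Longrightarrow> norm Q = sqrt (real CARD('n))"
  by (simp add: norm_eq_sqrt_inner inner_trace orth_mul trace_I)

lemma abel:
  fixes a h :: "'n::{finite,linorder} \<Rightarrow> real"
  assumes a: "\<And>i j. i \<le> j \<Longrightarrow> a j \<le> a i" and H: "\<And>k. 0 \<le> (\<Sum>i\<in>{..k}. h i)"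
    and H0: "(\<Sum>i\<in>UNIV. h i) = 0"
  shows "0 \<le> (\<Sum>i\<in>UNIV. a i * h i)"
proof -
  have claim: "a k * (\<Sum>i\<in>{..k}. h i) \<le> (\<Sum>i\<in>{..k}. a i * h i)" for k
  proof (induction "card {..<k}" arbitrary: k rule: less_induct)
    case less
    show ?case
    proof (cases "{..<k} = {}")
      case True
      then have "{..k} = {k}" by (auto simp: order.order_iff_strict)
      then show ?thesis by simp
    next
      case False
      define p where "p = Max {..<k}"
      have pk: "p < k" using False Max_in[of "{..<k}"] by (simp add: p_def)
      have eq: "{..k} = insert k {..p}"
      proof (intro set_eqI iffI)
        fix i assume "i \<in> {..k}"
        then have "i = k \<or> i < k" by auto
        then show "i \<in> insert k {..p}" unfolding p_def by auto
      next
        fix i assume "i \<in> insert k {..p}"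
        then show "i \<in> {..k}" using pk by auto
      qed
      have "{..<p} \<subset> {..<k}" using pk by auto
      then have "card {..<p} < card {..<k}" by (simp add: psubset_card_mono)
      then have IH: "a p * (\<Sum>i\<in>{..p}. h i) \<le> (\<Sum>i\<in>{..p}. a i * h i)" by (rule less)
      have "a k * (\<Sum>i\<in>{..p}. h i) \<le> a p * (\<Sum>i\<in>{..p}. h i)"
        using a[of p k] pk H[of p] by (intro mult_right_mono) auto
      moreover have "k \<notin> {..p}" using pk by auto
      ultimately show ?thesis using IH unfolding eq by (simp add: distrib_left)
    qed
  qed
  have "{..Max (UNIV::'n set)} = UNIV" by auto
  then show ?thesis using claim[of "Max UNIV"] H0 by simp
qed

lemma rearr:
  fixes p :: "'n::{finite,linorder} \<Rightarrow> 'n \<Rightarrow> real" and a b :: "'n \<Rightarrow> real"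
  assumes p0: "\<And>i j. 0 \<le> p i j" and row: "\<And>i. (\<Sum>j\<in>UNIV. p i j) = 1"
    and col: "\<And>j. (\<Sum>i\<in>UNIV. p i j) = 1"
    and a: "\<And>i j. i \<le> j \<Longrightarrow> a j \<le> a i" and b: "\<And>i j. i \<le> j \<Longrightarrow> b j \<le> b i"
  shows "(\<Sum>i\<in>UNIV. a i * (\<Sum>j\<in>UNIV. p i j * b j)) \<le> (\<Sum>i\<in>UNIV. a i * b i)"
proof -
  define h where "h i = b i - (\<Sum>j\<in>UNIV. p i j * b j)" for i
  have H: "0 \<le> (\<Sum>i\<in>{..k}. h i)" for k
  proof -
    define w where "w j = (\<Sum>i\<in>{..k}. p i j)" for j
    have w1: "w j \<le> 1" for j
      unfolding w_def col[of j, symmetric] by (rule sum_mono2) (auto simp: p0)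
    have w0: "0 \<le> w j" for j unfolding w_def by (rule sum_nonneg) (simp add: p0)
    have sw: "(\<Sum>j\<in>UNIV. w j) = real (card {..k})"
      unfolding w_def by (subst sum.swap) (simp add: row)
    have e1: "(\<Sum>i\<in>{..k}. b i) = (\<Sum>j\<in>UNIV. of_bool (j \<le> k) * b j)"
      by (simp add: sum.If_cases atMost_def)
    have e2: "(\<Sum>i\<in>{..k}. \<Sum>j\<in>UNIV. p i j * b j) = (\<Sum>j\<in>UNIV. w j * b j)"
      unfolding w_def by (subst sum.swap) (simp add: sum_distrib_right)
    have "(\<Sum>i\<in>{..k}. h i) = (\<Sum>j\<in>UNIV. (of_bool (j \<le> k) - w j) * b j)"
      unfolding h_def sum_subtractf e1 e2 by (simp add: left_diff_distrib sum_subtractf)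
    also have "\<dots> \<ge> (\<Sum>j\<in>UNIV. (of_bool (j \<le> k) - w j) * b k)"
    proof (rule sum_mono)
      fix j
      show "(of_bool (j \<le> k) - w j) * b k \<le> (of_bool (j \<le> k) - w j) * b j"
      proof (cases "j \<le> k")
        case True
        then show ?thesis using w1[of j] b[of j k] by (simp add: mult_left_mono)
      next
        case False
        then have "b j \<le> b k" using b[of k j] by auto
        then show ?thesis using False w0[of j] by (simp add: mult_left_mono)
      qed
    qed
    moreover have "(\<Sum>j\<in>UNIV. (of_bool (j \<le> k) - w j) * b k) = 0"
      unfolding sum_distrib_right[symmetric] sum_subtractf sw
      by (simp add: sum.If_cases atMost_def)
    ultimately show ?thesis by linarith
  qed
  have H0: "(\<Sum>i\<in>UNIV. h i) = 0"
    unfolding h_def sum_subtractf by (subst sum.swap) (simp add: sum_distrib_right[symmetric] col)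
  have "0 \<le> (\<Sum>i\<in>UNIV. a i * h i)" by (rule abel[OF a H H0])
  then show ?thesis unfolding h_def by (simp add: right_diff_distrib sum_subtractf)
qed


lemma inner_diag:
  fixes X L :: "real^'n^'n"
  assumes "diagonal_mat L"
  shows "X \<bullet> L = (\<Sum>i\<in>UNIV. X$i$i * L$i$i)"
proof -
  have "X$i \<bullet> L$i = X$i$i * L$i$i" for i
  proof -
    have "X$i \<bullet> L$i = (\<Sum>j\<in>UNIV. if j = i then X$i$i * L$i$i else 0)"
      unfolding inner_vec_def inner_real_def
      by (rule sum.cong) (use assms in \<open>auto simp: diagonal_mat_def\<close>)
    then show ?thesis by simp
  qed
  then show ?thesis unfolding inner_vec_def by simp
qed

lemma conj_diag_entry:
  fixes W Lo :: "real^'n^'n"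
  assumes "diagonal_mat Lo"
  shows "(W ** Lo ** transpose W)$i$i = (\<Sum>j\<in>UNIV. (W$i$j)^2 * Lo$j$j)"
proof -
  have "(W ** Lo)$i$k = W$i$k * Lo$k$k" for k
  proof -
    have "(W ** Lo)$i$k = (\<Sum>m\<in>UNIV. W$i$m * Lo$m$k)" by (simp add: matrix_matrix_mult_def)
    also have "\<dots> = (\<Sum>m\<in>UNIV. if m = k then W$i$k * Lo$k$k else 0)"
      by (rule sum.cong) (use assms in \<open>auto simp: diagonal_mat_def\<close>)
    finally show ?thesis by simp
  qed
  then show ?thesis
    unfolding matrix_matrix_mult_def[of "W ** Lo"] transpose_def
    by (simp add: power2_eq_square mult_ac)
qed

lemma vn_inner:
  fixes W Lo L :: "real^('n::{finite,linorder})^('n::{finite,linorder})"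
  assumes W: "orthogonal_matrix W" and "diagonal_mat Lo" "nonincr_diag Lo"
    "diagonal_mat L" "nonincr_diag L"
  shows "(W ** Lo ** transpose W) \<bullet> L \<le> Lo \<bullet> L"
proof -
  have row: "(\<Sum>j\<in>UNIV. (W$i$j)^2) = 1" for i
  proof -
    have "(W ** transpose W)$i$i = 1" using W by (simp add: orthogonal_matrix_def mat_def)
    then show ?thesis by (simp add: matrix_matrix_mult_def transpose_def power2_eq_square)
  qed
  have col: "(\<Sum>i\<in>UNIV. (W$i$j)^2) = 1" for j
  proof -
    have "(transpose W ** W)$j$j = 1" using W by (simp add: orthogonal_matrix_def mat_def)
    then show ?thesis by (simp add: matrix_matrix_mult_def transpose_def power2_eq_square)
  qed
  have a: "\<And>i j. i \<le> j \<Longrightarrow> L$j$j \<le> L$i$i" using assms(5) unfolding nonincr_diag_def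
    by (metis order.order_iff_strict order.refl)
  have b: "\<And>i j. i \<le> j \<Longrightarrow> Lo$j$j \<le> Lo$i$i" using assms(3) unfolding nonincr_diag_def
    by (metis order.order_iff_strict order.refl)
  have "(\<Sum>i\<in>UNIV. L$i$i * (\<Sum>j\<in>UNIV. (W$i$j)^2 * Lo$j$j)) \<le> (\<Sum>i\<in>UNIV. L$i$i * Lo$i$i)"
    by (rule rearr[where p="\<lambda>i j. (W$i$j)^2"]) (use row col a b in auto)
  then show ?thesis
    unfolding inner_diag[OF assms(4)] conj_diag_entry[OF assms(2)] by (simp add: mult_ac)
qed

lemma norm_diff_sq: "norm ((A::real^'n^'n) - B)^2 = A\<bullet>A - 2*(A\<bullet>B) + B\<bullet>B"
  by (simp add: power2_norm_eq_inner inner_diff_left inner_diff_right inner_commute)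

lemma vn_norm:
  fixes Q V Lo L :: "real^('n::{finite,linorder})^('n::{finite,linorder})"
  assumes Q: "orthogonal_matrix Q" and V: "orthogonal_matrix V"
    and "diagonal_mat Lo" "nonincr_diag Lo" "diagonal_mat L" "nonincr_diag L"
  shows "norm (Q ** Lo ** transpose Q - Q ** L ** transpose Q)
     \<le> norm (V ** Lo ** transpose V - Q ** L ** transpose Q)"
proof -
  define W where "W = transpose Q ** V"
  have W: "orthogonal_matrix W" unfolding W_def
    using Q V by (simp add: orthogonal_matrix_mul)
  have VQ: "V = Q ** W" unfolding W_def
    by (simp add: matrix_mul_assoc orth_mul[OF Q])
  define X where "X = W ** Lo ** transpose W"
  have VX: "V ** Lo ** transpose V = Q ** X ** transpose Q"
    unfolding VQ X_def by (simp add: matrix_transpose_mul matrix_mul_assoc)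
  have XX: "X \<bullet> X = Lo \<bullet> Lo" unfolding X_def by (rule inner_conj[OF W])
  have XL: "X \<bullet> L \<le> Lo \<bullet> L" unfolding X_def by (rule vn_inner) (use assms W in auto)
  have "norm (Q ** Lo ** transpose Q - Q ** L ** transpose Q)^2
      \<le> norm (V ** Lo ** transpose V - Q ** L ** transpose Q)^2"
    unfolding VX norm_diff_sq inner_conj[OF Q] using XX XL by simp
  then show ?thesis by (rule power2_le_imp_le) simp
qed


lemma tendsto_matmul:
  fixes A B :: "'a \<Rightarrow> real^'n^'n"
  shows "(A \<longlongrightarrow> a) F \<Longrightarrow> (B \<longlongrightarrow> b) F \<Longrightarrow> ((\<lambda>x. A x ** B x) \<longlongrightarrow> a ** b) F"
  unfolding matrix_matrix_mult_def by (intro tendsto_intros)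

lemma tendsto_transpose:
  fixes A :: "'a \<Rightarrow> real^'n^'n"
  shows "(A \<longlongrightarrow> a) F \<Longrightarrow> ((\<lambda>x. transpose (A x)) \<longlongrightarrow> transpose a) F"
  unfolding transpose_def by (intro tendsto_intros)

theorem theorem2:
  fixes SS :: "(real^('n::{finite,linorder})^('n::{finite,linorder})) set"
    and Lo :: "real^('n::{finite,linorder})^('n::{finite,linorder})"
    and S :: "nat \<Rightarrow> real^('n::{finite,linorder})^('n::{finite,linorder})"
  assumes "closed SS"
    and "\<forall>A\<in>SS. symmetric_mat A"
    and "\<forall>X. \<exists>!Y. Y \<in> SS \<and> (\<forall>Z\<in>SS. norm (X - Y) \<le> norm (X - Z))"
    and "diagonal_mat Lo" and "nonincr_diag Lo"
    and "S 0 \<in> iso_set Lo"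
    and "\<forall>k. S (Suc k) \<in> proj_M Lo (proj_set SS (S k))"
  shows "\<exists>T. (\<exists>r. strict_mono r \<and> (S \<circ> r) \<longlonglongrightarrow> T)
           \<and> T \<in> proj_M Lo (proj_set SS T)
           \<and> (\<lambda>k. norm (S k - proj_set SS (S k))) \<longlonglongrightarrow> norm (T - proj_set SS T)
           \<and> (norm (T - proj_set SS T) = 0 \<longrightarrow> T \<in> SS \<inter> iso_set Lo)"
proof -
  define P where "P = proj_set SS"
  have Pmin: "P X \<in> SS \<and> (\<forall>Z\<in>SS. norm (X - P X) \<le> norm (X - Z))" for X
    unfolding P_def proj_set_def by (rule theI') (use assms(3) in blast)
  have Puniq: "Y = P X" if "Y \<in> SS" "norm (X - Y) \<le> norm (X - P X)" for X Y
  proof -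
    have "Y \<in> SS \<and> (\<forall>Z\<in>SS. norm (X - Y) \<le> norm (X - Z))"
      using that Pmin[of X] by force
    then show ?thesis using Pmin[of X] assms(3) by metis
  qed
  have Plip: "norm (X - P X) \<le> norm (X - T) + norm (T - P T)" for X T
  proof -
    have "norm (X - P X) \<le> norm (X - P T)" using Pmin[of X] Pmin[of T] by blast
    also have "\<dots> \<le> norm (X - T) + norm (T - P T)" by (rule norm_diff_triangle_le[of X T]) simp_all
    finally show ?thesis .
  qed
  have "\<forall>k. \<exists>QL. orthogonal_matrix (fst QL) \<and> diagonal_mat (snd QL) \<and> nonincr_diag (snd QL)
      \<and> P (S k) = fst QL ** snd QL ** transpose (fst QL) \<and> S (Suc k) = fst QL ** Lo ** transpose (fst QL)"
  proof
    fix k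
    from assms(7) obtain Q L where "S (Suc k) = Q ** Lo ** transpose Q" "orthogonal_matrix Q"
      "diagonal_mat L" "nonincr_diag L" "P (S k) = Q ** L ** transpose Q"
      unfolding proj_M_def P_def by blast
    then show "\<exists>QL. orthogonal_matrix (fst QL) \<and> diagonal_mat (snd QL) \<and> nonincr_diag (snd QL)
      \<and> P (S k) = fst QL ** snd QL ** transpose (fst QL) \<and> S (Suc k) = fst QL ** Lo ** transpose (fst QL)"
      by (intro exI[of _ "(Q, L)"]) auto
  qed
  then obtain QL where QL: "\<And>k. orthogonal_matrix (fst (QL k)) \<and> diagonal_mat (snd (QL k)) \<and> nonincr_diag (snd (QL k))
      \<and> P (S k) = fst (QL k) ** snd (QL k) ** transpose (fst (QL k)) \<and> S (Suc k) = fst (QL k) ** Lo ** transpose (fst (QL k))"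
    by metis
  define Qf where "Qf k = fst (QL k)" for k
  define Lf where "Lf k = snd (QL k)" for k
  have Qo: "orthogonal_matrix (Qf k)" and Ld: "diagonal_mat (Lf k)" and Ln: "nonincr_diag (Lf k)"
    and PS: "P (S k) = Qf k ** Lf k ** transpose (Qf k)" and SS': "S (Suc k) = Qf k ** Lo ** transpose (Qf k)" for k
    using QL[of k] unfolding Qf_def Lf_def by auto
  have iso: "\<exists>V. orthogonal_matrix V \<and> S k = V ** Lo ** transpose V" for k
  proof (cases k)
    case 0 then show ?thesis using assms(6) unfolding iso_set_def by auto
  next
    case (Suc m) then show ?thesis using Qo SS' by blast
  qed
  define d where "d k = norm (S k - P (S k))" for k
  define e where "e k = norm (S (Suc k) - P (S k))" for k
  have de: "d (Suc k) \<le> e k" for k unfolding d_def e_def using Pmin[of "S (Suc k)"] Pmin[of "S k"] by blast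
  have ed: "e k \<le> d k" for k
  proof -
    obtain V where V: "orthogonal_matrix V" "S k = V ** Lo ** transpose V" using iso by blast
    have eq: "S k - P (S k) = V ** Lo ** transpose V - Qf k ** Lf k ** transpose (Qf k)"
      using PS[of k] V(2) by simp
    show ?thesis unfolding d_def e_def eq unfolding SS' PS
      by (rule vn_norm) (use Qo V assms(4,5) Ld Ln in auto)
  qed
  have "decseq d" using de ed by (intro decseq_SucI) (meson order.trans)
  moreover have "\<forall>i. 0 \<le> d i" unfolding d_def by simp
  ultimately obtain dl where dl: "d \<longlonglongrightarrow> dl" by (rule decseq_convergent)
  have el: "e \<longlonglongrightarrow> dl"
    by (rule tendsto_sandwich[of "\<lambda>k. d (Suc k)" _ _ d])
       (use de ed dl LIMSEQ_Suc[OF dl] in auto)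
  have nS: "norm (S k) = norm Lo" for k using iso[of k] norm_conj by metis
  have nQ: "norm (Qf k) = sqrt (real CARD('n))" for k using Qo norm_orth by blast
  have nP: "norm (P (S k)) \<le> norm Lo + d 0" for k
  proof -
    have "d k \<le> d 0" using \<open>decseq d\<close> by (simp add: decseq_def)
    moreover have "norm (P (S k)) \<le> norm (S k) + d k" unfolding d_def
      by (metis norm_minus_commute norm_triangle_sub)
    ultimately show ?thesis using nS by simp
  qed
  define f where "f k = (Qf k, P (S k))" for k
  have "bounded (range f)" unfolding bounded_iff
  proof (intro exI ballI)
    fix x assume "x \<in> range f"
    then obtain k where "x = f k" by auto
    then show "norm x \<le> sqrt (real CARD('n)) + (norm Lo + d 0)"
      unfolding f_def using norm_Pair_le[of "Qf k" "P (S k)"] nQ[of k] nP[of k] by simp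
  qed
  then obtain lim r where r: "strict_mono r" and fr: "(f \<circ> r) \<longlonglongrightarrow> lim"
    using bounded_imp_convergent_subsequence by blast
  define Q where "Q = fst lim"
  define Y where "Y = snd lim"
  have Qr: "(\<lambda>j. Qf (r j)) \<longlonglongrightarrow> Q" unfolding Q_def
    using tendsto_fst[OF fr] by (simp add: f_def o_def)
  have Yr: "(\<lambda>j. P (S (r j))) \<longlonglongrightarrow> Y" unfolding Y_def
    using tendsto_snd[OF fr] by (simp add: f_def o_def)
  have "(\<lambda>j. transpose (Qf (r j)) ** Qf (r j)) \<longlonglongrightarrow> transpose Q ** Q"
    by (intro tendsto_matmul tendsto_transpose Qr)
  moreover have "(\<lambda>j. transpose (Qf (r j)) ** Qf (r j)) = (\<lambda>j. mat 1)"
    using Qo by (simp add: orthogonal_matrix_def)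
  ultimately have "(\<lambda>j. mat 1) \<longlonglongrightarrow> transpose Q ** Q" by simp
  then have "transpose Q ** Q = mat 1" using LIMSEQ_unique[OF tendsto_const] by metis
  then have Qorth: "orthogonal_matrix Q" by (simp add: orthogonal_matrix)
  define L where "L = transpose Q ** Y ** Q"
  have LfE: "Lf k = transpose (Qf k) ** P (S k) ** Qf k" for k
    unfolding PS by (simp add: matrix_mul_assoc orth_mul[OF Qo])
      (simp add: matrix_mul_assoc[symmetric] orth_mul[OF Qo])
  have Lr: "(\<lambda>j. Lf (r j)) \<longlonglongrightarrow> L" unfolding LfE L_def
    by (intro tendsto_matmul tendsto_transpose Qr Yr)
  have Lent: "(\<lambda>j. Lf (r j) $ i $ i') \<longlonglongrightarrow> L $ i $ i'" for i i'
    by (intro tendsto_vec_nth Lr)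
  have Ldiag: "diagonal_mat L" unfolding diagonal_mat_def
  proof (intro allI impI)
    fix i i' :: 'n assume "i \<noteq> i'"
    then have "(\<lambda>j. Lf (r j) $ i $ i') = (\<lambda>j. 0)" using Ld unfolding diagonal_mat_def by auto
    then have "(\<lambda>j. 0) \<longlonglongrightarrow> L $ i $ i'" using Lent[of i i'] by simp
    then show "L $ i $ i' = 0" using LIMSEQ_unique[OF tendsto_const] by metis
  qed
  have Lnon: "nonincr_diag L" unfolding nonincr_diag_def
  proof (intro allI impI)
    fix i i' :: 'n assume "i < i'"
    then have "\<And>j. Lf (r j) $ i' $ i' \<le> Lf (r j) $ i $ i" using Ln unfolding nonincr_diag_def by auto
    then show "L $ i' $ i' \<le> L $ i $ i" using Lent[of i' i'] Lent[of i i] by (intro LIMSEQ_le) auto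
  qed
  have YQ: "Y = Q ** L ** transpose Q" unfolding L_def
    by (simp add: matrix_mul_assoc orth_mul[OF Qorth])
      (simp add: matrix_mul_assoc[symmetric] orth_mul[OF Qorth])
  have YS: "Y \<in> SS" using closed_sequentially[OF assms(1), of "\<lambda>j. P (S (r j))"] Pmin Yr by blast
  define T where "T = Q ** Lo ** transpose Q"
  have Tr: "(\<lambda>j. S (Suc (r j))) \<longlonglongrightarrow> T" unfolding SS' T_def
    by (intro tendsto_matmul tendsto_transpose Qr tendsto_const)
  have "(\<lambda>j. e (r j)) \<longlonglongrightarrow> norm (T - Y)" unfolding e_def
    by (intro tendsto_intros Tr Yr)
  moreover have "(\<lambda>j. e (r j)) \<longlonglongrightarrow> dl" using LIMSEQ_subseq_LIMSEQ[OF el r] by (simp add: o_def)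
  ultimately have TY: "norm (T - Y) = dl" using LIMSEQ_unique by blast
  have "(\<lambda>j. d (Suc (r j)) - norm (T - P T)) \<longlonglongrightarrow> 0"
  proof (rule Lim_null_comparison)
    show "\<forall>\<^sub>F j in sequentially. norm (d (Suc (r j)) - norm (T - P T)) \<le> norm (S (Suc (r j)) - T)"
    proof (intro always_eventually allI)
      fix j
      have "d (Suc (r j)) \<le> norm (S (Suc (r j)) - T) + norm (T - P T)" unfolding d_def by (rule Plip)
      moreover have "norm (T - P T) \<le> norm (T - S (Suc (r j))) + d (Suc (r j))" unfolding d_def by (rule Plip)
      ultimately show "norm (d (Suc (r j)) - norm (T - P T)) \<le> norm (S (Suc (r j)) - T)"
        by (simp add: norm_minus_commute)
    qed
    show "(\<lambda>j. norm (S (Suc (r j)) - T)) \<longlonglongrightarrow> 0"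
      using Tr by (simp add: tendsto_norm_zero_iff LIMSEQ_iff_nz dist_norm)
  qed
  then have "(\<lambda>j. d (Suc (r j))) \<longlonglongrightarrow> norm (T - P T)" by (simp add: LIM_zero_iff)
  moreover have "(\<lambda>j. d (Suc (r j))) \<longlonglongrightarrow> dl"
  proof -
    have "strict_mono (\<lambda>j. Suc (r j))" using r by (simp add: strict_mono_def)
    then show ?thesis using LIMSEQ_subseq_LIMSEQ[OF dl] by (simp add: o_def)
  qed
  ultimately have TPT: "norm (T - P T) = dl" using LIMSEQ_unique by blast
  have YP: "Y = P T" using Puniq[OF YS] TY TPT by simp
  have sm: "strict_mono (\<lambda>j. Suc (r j))" using r by (simp add: strict_mono_def)
  show ?thesis
  proof (intro exI conjI impI)
    show "strict_mono (\<lambda>j. Suc (r j))" by (rule sm)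
    show "(S \<circ> (\<lambda>j. Suc (r j))) \<longlonglongrightarrow> T" using Tr by (simp add: o_def)
    show "T \<in> proj_M Lo (proj_set SS T)" unfolding proj_M_def P_def[symmetric] YP[symmetric]
      using Qorth Ldiag Lnon YQ T_def by blast
    show "(\<lambda>k. norm (S k - proj_set SS (S k))) \<longlonglongrightarrow> norm (T - proj_set SS T)"
      using dl TPT unfolding d_def P_def by simp
    assume "norm (T - proj_set SS T) = 0"
    then have "T = P T" unfolding P_def by simp
    then show "T \<in> SS \<inter> iso_set Lo" using Pmin[of T] Qorth unfolding iso_set_def T_def by auto
  qed
qed

end
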